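(* For $p\in(0,1]$ define on $(0,1)$ $$w(x)=x^{p}+p(p-1)x-(p^{2}+2p-2)-p(p+1)x^{1-p}+(p-1)^{2}x^{-p}.$$ Then: (i) if $p\in(0,2/3]$, $w(x)>0$ for all $x\in(0,1)$; (ii) if $p\in(2/3,1)$, there is a unique $x_1\in(0,1)$ such that $w>0$ on $(0,x_1)$ and $w<0$ on $(x_1,1)$; (iii) if $p=1$, $w(x)<0$ for all $x\in(0,1)$. *)

theory Defs
  imports Complex_Main
begin

definition w :: "real \<Rightarrow> real \<Rightarrow> real" where
  "w p x = x powr p + p * (p - 1) * x - (p^2 + 2*p - 2) - p * (p + 1) * x powr (1 - p)
           + (p - 1)^2 * x powr (-p)"

end

theory Submission
  imports Defs "HOL-Analysis.Analysis"
begin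

definition k :: "real \<Rightarrow> real \<Rightarrow> real" where
 "k p x = 1 - (1-p)*x powr (1-p) - (1-p^2)*x powr (1-2*p) - (1-p)^2 * x powr (-2*p)"

lemma w_deriv:
  assumes "0 < x"
  shows "DERIV (w p) x :> p * x powr (p-1) * k p x"
proof -
  have d: "DERIV (w p) x :> (p * x powr (p-1) + p*(p-1) - p*(p+1)*((1-p)*x powr (1-p-1)) + (p-1)^2*((-p)*x powr (-p-1)))"
    unfolding w_def[abs_def] using assms
    by (auto intro!: derivative_eq_intros)
  have e1: "x powr (p-1) * x powr (1-p) = 1" using assms by (simp add: powr_add[symmetric])
  have e2: "x powr (p-1) * x powr (1-2*p) = x powr (-p)" using assms by (simp add: powr_add[symmetric])
  have e3: "x powr (p-1) * x powr (-2*p) = x powr (-p-1)" using assms by (simp add: powr_add[symmetric])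
  have "p * x powr (p-1) * k p x = p * x powr (p-1) - p*(1-p)*(x powr (p-1) * x powr (1-p))
      - p*(1-p^2)*(x powr (p-1) * x powr (1-2*p)) - p*(1-p)^2*(x powr (p-1) * x powr (-2*p))"
    unfolding k_def by (simp add: algebra_simps)
  also have "\<dots> = (p * x powr (p-1) + p*(p-1) - p*(p+1)*((1-p)*x powr (1-p-1)) + (p-1)^2*((-p)*x powr (-p-1)))"
    unfolding e1 e2 e3 by (simp add: algebra_simps power2_eq_square)
  finally show ?thesis using d by simp
qed

lemma k_deriv:
  assumes "0 < x"
  shows "DERIV (k p) x :> (1-p)*x powr(-2*p-1) * (-(1-p)*x powr (p+1) + (1+p)*(2*p-1)*x + 2*p*(1-p))"
proof -
  have d: "DERIV (k p) x :> (- (1-p)*((1-p)*x powr (1-p-1)) - (1-p^2)*((1-2*p)*x powr (1-2*p-1)) - (1-p)^2*((-2*p)*x powr (-2*p-1)))"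
    unfolding k_def[abs_def] using assms
    by (auto intro!: derivative_eq_intros simp: algebra_simps)
  have e1: "x powr(-2*p-1) * x powr (p+1) = x powr (-p)" using assms by (simp add: powr_add[symmetric])
  have e2: "x powr(-2*p-1) * x = x powr (-2*p)" using assms powr_add[of x "-2*p-1" 1] by simp
  have "(1-p)*x powr(-2*p-1) * (-(1-p)*x powr (p+1) + (1+p)*(2*p-1)*x + 2*p*(1-p))
     = (p-1)*(1-p)*(x powr(-2*p-1) * x powr (p+1)) + (1-p)*(1+p)*(2*p-1)*(x powr(-2*p-1) * x) + 2*p*(1-p)^2*x powr(-2*p-1)"
    by (simp add: algebra_simps power2_eq_square)
  also have "\<dots> = (- (1-p)*((1-p)*x powr (1-p-1)) - (1-p^2)*((1-2*p)*x powr (1-2*p-1)) - (1-p)^2*((-2*p)*x powr (-2*p-1)))"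
    unfolding e1 e2 by (simp add: algebra_simps power2_eq_square)
  finally show ?thesis using d by simp
qed


lemma w_cont: assumes "0 < a" shows "continuous_on {a..b} (w p)"
  using assms by (intro continuous_at_imp_continuous_on ballI DERIV_isCont[OF w_deriv]) auto

lemma k_cont: assumes "0 < a" shows "continuous_on {a..b} (k p)"
  using assms by (intro continuous_at_imp_continuous_on ballI DERIV_isCont[OF k_deriv]) auto

lemma w_dec:
  assumes "0 < a" "a < b" "0 < p" "\<And>x. a < x \<Longrightarrow> x < b \<Longrightarrow> k p x < 0"
  shows "w p a > w p b"
proof (rule DERIV_neg_imp_decreasing_open[OF assms(2) _ w_cont[OF assms(1)]])
  fix x assume "a < x" "x < b"
  then have "p * x powr (p-1) * k p x < 0" using assms
    by (intro mult_pos_neg) auto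
  moreover have "DERIV (w p) x :> p * x powr (p-1) * k p x" using w_deriv \<open>a < x\<close> assms(1) by auto
  ultimately show "\<exists>y. DERIV (w p) x :> y \<and> y < 0" by blast
qed

lemma w_inc:
  assumes "0 < a" "a < b" "0 < p" "\<And>x. a < x \<Longrightarrow> x < b \<Longrightarrow> k p x > 0"
  shows "w p a < w p b"
proof (rule DERIV_pos_imp_increasing_open[OF assms(2) _ w_cont[OF assms(1)]])
  fix x assume "a < x" "x < b"
  then have "p * x powr (p-1) * k p x > 0" using assms
    by (intro mult_pos_pos) auto
  moreover have "DERIV (w p) x :> p * x powr (p-1) * k p x" using w_deriv \<open>a < x\<close> assms(1) by auto
  ultimately show "\<exists>y. DERIV (w p) x :> y \<and> y > 0" by blast
qed

lemma k_mono:
  assumes "1/2 < p" "p < 1" "0 < a" "a < b" "b \<le> 1"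
  shows "k p a < k p b"
proof (rule DERIV_pos_imp_increasing[OF assms(4)])
  fix x assume x: "a \<le> x" "x \<le> b"
  then have x0: "0 < x" "x \<le> 1" using assms by auto
  have "x powr (p+1) = x powr p * x" using x0 powr_add[of x p 1] by simp
  also have "\<dots> \<le> 1 * x" using x0 assms by (intro mult_right_mono powr_le1) auto
  finally have "(1-p)*x powr(p+1) \<le> (1-p)*x" using assms by (intro mult_left_mono) auto
  moreover have "(1+p)*(2*p-1)*x - (1-p)*x + 2*p*(1-p) = x*(4*p-2) + (1-x)*(2*p-2*p^2)"
    by (simp add: algebra_simps power2_eq_square)
  moreover have "x*(4*p-2) > 0" using x0 assms by auto
  moreover have "(1-x)*(2*p-2*p^2) \<ge> 0" using x0 assms
    by (intro mult_nonneg_nonneg) (auto simp: power2_eq_square)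
  ultimately have B: "-(1-p)*x powr (p+1) + (1+p)*(2*p-1)*x + 2*p*(1-p) > 0" by linarith
  have "(1-p)*x powr(-2*p-1) * (-(1-p)*x powr (p+1) + (1+p)*(2*p-1)*x + 2*p*(1-p)) > 0"
    using B assms x0 by (intro mult_pos_pos) auto
  then show "\<exists>y. DERIV (k p) x :> y \<and> y > 0" using k_deriv x0 by blast
qed

lemma k_neg_small:
  assumes "0 < p" "p \<le> 1/2" "0 < x" "x \<le> 1"
  shows "k p x < 0"
proof -
  have e1: "x powr (2*p) * x powr (1-p) = x powr (p+1)" using assms by (simp add: powr_add[symmetric])
  have e2: "x powr (2*p) * x powr (1-2*p) = x" using assms by (simp add: powr_add[symmetric])
  have e3: "x powr (2*p) * x powr (-2*p) = 1" using assms by (simp add: powr_add[symmetric])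
  have g: "x powr (2*p) * k p x = x powr (2*p) - (1-p)*x powr (p+1) - (1-p^2)*x - (1-p)^2"
  proof -
    have "x powr (2*p) * k p x = x powr (2*p) - (1-p)*(x powr (2*p) * x powr (1-p))
       - (1-p^2)*(x powr (2*p) * x powr (1-2*p)) - (1-p)^2*(x powr (2*p) * x powr (-2*p))"
      unfolding k_def by (simp add: algebra_simps)
    then show ?thesis unfolding e1 e2 e3 by simp
  qed
  have Y: "x powr (2*p) \<le> 2*p*x + (1-2*p)"
    using Youngs_inequality_0[of "2*p" "1-2*p" x 1] assms by simp
  have "2*p*x + (1-2*p) - (1-p^2)*x - (1-p)^2 = -(1-x)*p^2 + x*(2*p-1)"
    by (simp add: algebra_simps power2_eq_square)
  moreover have "(1-x)*p^2 \<ge> 0" using assms by auto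
  moreover have "x*(2*p-1) \<le> 0" using assms by (intro mult_nonneg_nonpos) auto
  moreover have "(1-p)*x powr (p+1) > 0" using assms by auto
  ultimately have "x powr (2*p) * k p x < 0" using g Y by linarith
  moreover have "x powr (2*p) > 0" using assms by auto
  ultimately show ?thesis by (simp add: mult_less_0_iff)
qed

lemma k_one: "k p 1 = 3*p - 2"
  unfolding k_def by (simp add: algebra_simps power2_eq_square)

lemma w_one: "w p 1 = 4 - 6*p"
  unfolding w_def by (simp add: algebra_simps power2_eq_square)


lemma part1:
  assumes "0 < p" "p \<le> 2/3" "0 < x" "x < 1"
  shows "w p x > 0"
proof -
  have "w p x > w p 1"
  proof (rule w_dec[OF assms(3) assms(4) assms(1)])
    fix y assume y: "x < y" "y < 1"
    show "k p y < 0"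
    proof (cases "p \<le> 1/2")
      case True then show ?thesis using k_neg_small[of p y] assms y by auto
    next
      case False then show ?thesis using k_mono[of p y 1] k_one[of p] assms y by auto
    qed
  qed
  then show ?thesis using w_one[of p] assms by auto
qed

lemma part3:
  assumes "0 < x" "x < 1"
  shows "w 1 x < 0"
  using assms unfolding w_def by simp

lemma part2:
  assumes p: "2/3 < p" "p < 1"
  shows "\<exists>!x1. 0 < x1 \<and> x1 < 1 \<and>
                 (\<forall>x. 0 < x \<and> x < x1 \<longrightarrow> w p x > 0) \<and>
                 (\<forall>x. x1 < x \<and> x < 1 \<longrightarrow> w p x < 0)"
proof -
  define x0 where "x0 = ((1-p)/2) powr (1/p)"
  have x0pos: "0 < x0" unfolding x0_def using p by simp
  have "x0 < 1 powr (1/p)" unfolding x0_def using p by (intro powr_less_mono2) auto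
  then have x0lt: "x0 < 1" by simp
  have "x0 powr (-2*p) = ((1-p)/2) powr (1/p * (-2*p))" unfolding x0_def by (simp add: powr_powr)
  also have "1/p * (-2*p) = - 2" using p by simp
  finally have "x0 powr (-2*p) = inverse (((1-p)/2)^2)" using p by (simp add: powr_minus)
  moreover have "(1-p)^2 \<noteq> 0" using p by simp
  ultimately have "(1-p)^2 * x0 powr (-2*p) = 4" by (simp add: field_simps)
  moreover have "p^2 \<le> 1" using p by (simp add: power_le_one)
  then have "(1-p)*x0 powr (1-p) \<ge> 0" "(1-p^2)*x0 powr (1-2*p) \<ge> 0" using p
    by (auto intro!: mult_nonneg_nonneg)
  ultimately have kx0: "k p x0 < 0" unfolding k_def by linarith
  have "\<exists>c. x0 \<le> c \<and> c \<le> 1 \<and> k p c = 0"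
    using IVT'[of "k p" x0 0 1] kx0 k_one[of p] p x0lt k_cont[OF x0pos] by auto
  then obtain c where c: "x0 \<le> c" "c \<le> 1" "k p c = 0" by blast
  have "c \<noteq> 1" using c k_one[of p] p by auto
  then have c0: "0 < c" "c < 1" using c x0pos by auto
  have kneg: "k p y < 0" if "0 < y" "y < c" for y
    using k_mono[of p y c] c c0 that p by auto
  have kpos: "k p y > 0" if "c < y" "y \<le> 1" for y
    using k_mono[of p c y] c c0 that p by auto
  have wc: "w p c < w p 1"
    by (rule w_inc[OF c0(1) c0(2)]) (use p kpos in auto)
  define xA where "xA = ((1-p)^2/4) powr (1/p)"
  have xApos: "0 < xA" unfolding xA_def using p by simp
  have xAp: "xA powr p = (1-p)^2/4" unfolding xA_def using p by (simp add: powr_powr)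
  define y where "y = min (c/2) xA"
  have y: "0 < y" "y < c" "y \<le> xA" using c0 xApos unfolding y_def by auto
  have "y powr p \<le> xA powr p" using y p by (intro powr_mono2) auto
  moreover have "0 < y powr p" using y by simp
  ultimately have "inverse (xA powr p) \<le> inverse (y powr p)" by (rule le_imp_inverse_le)
  then have "y powr (-p) \<ge> inverse ((1-p)^2/4)" using xAp by (simp add: powr_minus)
  then have "(1-p)^2 * y powr (-p) \<ge> (1-p)^2 * inverse ((1-p)^2/4)"
    by (intro mult_left_mono) auto
  moreover have "(1-p)^2 * inverse ((1-p)^2/4) = 4" using p by (simp add: field_simps)
  ultimately have A: "(p - 1)^2 * y powr (-p) \<ge> 4" by (simp add: power2_commute)
  have B: "y powr (1-p) \<le> 1" using y c0 p by (intro powr_le1) auto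
  have C: "p*(p-1)*y \<ge> p*(p-1)" using y c0 p
    using mult_left_mono_neg[of y 1 "p*(p-1)"] by (simp add: mult_nonneg_nonpos)
  have D: "p*(p+1)*y powr (1-p) \<le> p*(p+1)" using B p by (simp add: mult_left_le)
  have E: "y powr p > 0" using y by simp
  have "p^2 \<le> 1" using p by (simp add: power_le_one)
  moreover have "p*(p-1) - (p^2 + 2*p - 2) - p*(p+1) = 2 - 4*p - p^2" by (simp add: algebra_simps power2_eq_square)
  ultimately have F: "p*(p-1) - (p^2 + 2*p - 2) - p*(p+1) > -3" using p by linarith
  have wy: "w p y > 0" unfolding w_def using A C D E F by linarith
  have wc0: "w p c < 0" using wc w_one[of p] p by auto
  obtain x1 where x1: "y \<le> x1" "x1 \<le> c" "w p x1 = 0"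
    using IVT2'[of "w p" c 0 y] wy wc0 y w_cont[OF y(1)] by auto
  have x1': "y < x1" "x1 < c" using x1 wy wc0 by (auto simp: order.order_iff_strict)
  have P: "0 < x1 \<and> x1 < 1 \<and>
                 (\<forall>x. 0 < x \<and> x < x1 \<longrightarrow> w p x > 0) \<and>
                 (\<forall>x. x1 < x \<and> x < 1 \<longrightarrow> w p x < 0)"
  proof (intro conjI allI impI)
    show "0 < x1" "x1 < 1" using x1' y c0 by auto
  next
    fix x assume "0 < x \<and> x < x1"
    then show "w p x > 0" using w_dec[of x x1 p] kneg x1 x1' p by auto
  next
    fix x assume x: "x1 < x \<and> x < 1"
    show "w p x < 0"
    proof (cases "x \<le> c")
      case True then show ?thesis using w_dec[of x1 x p] kneg x1 x1' p y x by auto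
    next
      case False then show ?thesis using w_inc[of x 1 p] kpos w_one[of p] p c0 x by auto
    qed
  qed
  show ?thesis
  proof (rule ex1I[of _ x1])
    show "0 < x1 \<and> x1 < 1 \<and>
                 (\<forall>x. 0 < x \<and> x < x1 \<longrightarrow> w p x > 0) \<and>
                 (\<forall>x. x1 < x \<and> x < 1 \<longrightarrow> w p x < 0)" by (rule P)
  next
    fix z assume z: "0 < z \<and> z < 1 \<and>
                 (\<forall>x. 0 < x \<and> x < z \<longrightarrow> w p x > 0) \<and>
                 (\<forall>x. z < x \<and> x < 1 \<longrightarrow> w p x < 0)"
    show "z = x1"
    proof (rule ccontr)
      assume "z \<noteq> x1"
      then consider "z < x1" | "x1 < z" by linarith
      then show False
      proof cases
        case 1
        then have "w p ((z+x1)/2) > 0" using P z by auto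
        moreover have "w p ((z+x1)/2) < 0" using 1 P z by auto
        ultimately show False by simp
      next
        case 2
        then have "w p ((z+x1)/2) < 0" using P z by auto
        moreover have "w p ((z+x1)/2) > 0" using 2 P z by auto
        ultimately show False by simp
      qed
    qed
  qed
qed


theorem mainTheorem8:
  shows "(\<forall>p::real. 0 < p \<and> p \<le> 2/3 \<longrightarrow> (\<forall>x. 0 < x \<and> x < 1 \<longrightarrow> w p x > 0))
       \<and> (\<forall>p::real. 2/3 < p \<and> p < 1 \<longrightarrow>
            (\<exists>!x1. 0 < x1 \<and> x1 < 1 \<and>
                 (\<forall>x. 0 < x \<and> x < x1 \<longrightarrow> w p x > 0) \<and>
                 (\<forall>x. x1 < x \<and> x < 1 \<longrightarrow> w p x < 0)))
       \<and> (\<forall>x::real. 0 < x \<and> x < 1 \<longrightarrow> w 1 x < 0)"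
    using part1 part2 part3 by blast

end
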